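(* There exist metric spaces $X,Y$ and a Lipschitz function $f\colon X\to Y$ such that $\operatorname{asdim}(Y)=0$ and $\sup\{\operatorname{asdim}(f^{-1}(B)) : B\subset Y \text{ bounded}\}=0$, but $\operatorname{asdim}(X)>0$.
   Context: For a metric space $Z$, $\operatorname{asdim}(Z)\le n$ iff for every $r>0$ there are $D<\infty$ and families $\mathcal U_1,\dots,\mathcal U_{n+1}$ of subsets of $Z$ covering $Z$, each $r$-disjoint (points in different members of a family are at distance $\ge r$), with members of diameter $\le D$; $\operatorname{asdim}(Z)$ is the least such $n$. *)

theory Defs
  imports "HOL-Analysis.Analysis" "HOL-Library.Extended_Nat"
begin

definition asdim_le :: "'a metric \<Rightarrow> nat \<Rightarrow> bool" where
  "asdim_le m n \<longleftrightarrow>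
     (\<forall>r>0. \<exists>D::real. \<exists>U :: nat \<Rightarrow> 'a set set.
        (\<forall>i\<le>n. \<forall>A\<in>U i. A \<subseteq> mspace m) \<and>
        mspace m \<subseteq> (\<Union>i\<le>n. \<Union>(U i)) \<and>
        (\<forall>i\<le>n. \<forall>A\<in>U i. \<forall>B\<in>U i. A \<noteq> B \<longrightarrow>
            (\<forall>x\<in>A. \<forall>y\<in>B. r \<le> mdist m x y)) \<and>
        (\<forall>i\<le>n. \<forall>A\<in>U i. \<forall>x\<in>A. \<forall>y\<in>A. mdist m x y \<le> D))"

definition asdim :: "'a metric \<Rightarrow> enat" where
  "asdim m = (if \<exists>n. asdim_le m n then enat (LEAST n. asdim_le m n) else \<infinity>)"

end

theory Submission
  imports Defs
begin

definition gX :: "real \<Rightarrow> real" where "gX x = real (nat \<lfloor>x\<rfloor>)"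

definition dX :: "real \<Rightarrow> real \<Rightarrow> real" where
  "dX x y = (if gX x = gX y then (gX x + 1) * \<bar>x - y\<bar> else max (gX x) (gX y) + 2)"

definition dY :: "real \<Rightarrow> real \<Rightarrow> real" where
  "dY a b = (if a = b then 0 else max \<bar>a\<bar> \<bar>b\<bar> + 2)"

lemma gX_nonneg: "0 \<le> gX x" by (simp add: gX_def)

lemma gX_fiber: "0 \<le> x \<Longrightarrow> 0 \<le> y \<Longrightarrow> gX x = gX y \<Longrightarrow> \<bar>x - y\<bar> < 1"
  unfolding gX_def
  by (smt (verit, best) floor_le_iff le_floor_iff nat_0_le of_int_of_nat_eq of_nat_eq_iff zero_le_floor of_int_floor_le real_of_int_floor_add_one_gt)

lemma gX_le: "0 \<le> x \<Longrightarrow> x < gX x + 1"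
  unfolding gX_def by (simp add: real_of_int_floor_add_one_gt)

lemma ms_X: "Metric_space {0..} dX"
proof
  fix x y show "0 \<le> dX x y" using gX_nonneg[of x] gX_nonneg[of y] by (simp add: dX_def)
  show "dX x y = dX y x" by (auto simp: dX_def abs_minus_commute max.commute)
  assume "x \<in> {0..}" "y \<in> {0..}"
  then show "dX x y = 0 \<longleftrightarrow> x = y"
    using gX_nonneg[of x] gX_nonneg[of y] by (auto simp: dX_def)
next
  fix x y z :: real assume a: "x \<in> {0..}" "y \<in> {0..}" "z \<in> {0..}"
  have f1: "\<bar>x - z\<bar> < 1" if "gX x = gX z" using gX_fiber a that by auto
  have tri: "\<bar>x - z\<bar> \<le> \<bar>x - y\<bar> + \<bar>y - z\<bar>" by linarith
  have ny: "0 \<le> gX x" "0 \<le> gX y" "0 \<le> gX z" using gX_nonneg by auto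
  show "dX x z \<le> dX x y + dX y z"
  proof (cases "gX x = gX z")
    case True
    show ?thesis
    proof (cases "gX x = gX y")
      case True
      then have "(gX x + 1) * \<bar>x - z\<bar> \<le> (gX x + 1) * (\<bar>x - y\<bar> + \<bar>y - z\<bar>)"
        using tri ny by (intro mult_left_mono) auto
      then show ?thesis using True \<open>gX x = gX z\<close> by (simp add: dX_def distrib_left)
    next
      case False
      have "(gX x + 1) * \<bar>x - z\<bar> \<le> (gX x + 1) * 1"
        using f1[OF \<open>gX x = gX z\<close>] ny by (intro mult_left_mono) auto
      moreover have "gX x + 1 \<le> (max (gX x) (gX y) + 2) + (max (gX y) (gX z) + 2)" using ny by linarith
      ultimately show ?thesis using False \<open>gX x = gX z\<close> ny unfolding dX_def
        by (simp only: if_True if_False) (smt (verit))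
    qed
  next
    case False
    then show ?thesis using ny
      by (auto simp: dX_def split: if_splits intro: add_increasing)
  qed
qed

lemma ms_Y: "Metric_space UNIV dY"
proof
  fix x y :: real show "0 \<le> dY x y" by (simp add: dY_def)
  show "dY x y = dY y x" by (auto simp: dY_def max.commute)
  show "dY x y = 0 \<longleftrightarrow> x = y" by (auto simp: dY_def)
next
  fix x y z :: real
  show "dY x z \<le> dY x y + dY y z" by (auto simp: dY_def)
qed

lemma asdim_zeroI: "asdim_le m 0 \<Longrightarrow> asdim m = 0"
  unfolding asdim_def by (auto simp: zero_enat_def)

lemma asdim_posI: "\<not> asdim_le m 0 \<Longrightarrow> asdim m > 0"
proof -
  assume h: "\<not> asdim_le m 0"
  show ?thesis
  proof (cases "\<exists>n. asdim_le m n")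
    case True
    then have "asdim_le m (LEAST n. asdim_le m n)" by (rule LeastI_ex)
    then have "(LEAST n. asdim_le m n) \<noteq> 0" using h by metis
    then have "enat 0 < enat (LEAST n. asdim_le m n)" by simp
    then show ?thesis using True unfolding asdim_def by (simp add: zero_enat_def)
  next
    case False then have "asdim m = \<infinity>" unfolding asdim_def by meson
    then show ?thesis by simp
  qed
qed

lemma Y_asdim: "asdim_le (metric (UNIV, dY)) 0"
proof -
  interpret Metric_space UNIV dY by (rule ms_Y)
  show ?thesis unfolding asdim_le_def
  proof (intro allI impI)
    fix r :: real assume r: "r > 0"
    define U :: "nat \<Rightarrow> real set set" where
      "U = (\<lambda>_. insert {y. \<bar>y\<bar> < r} {{y} | y. \<bar>y\<bar> \<ge> r})"
    have c: "UNIV \<subseteq> (\<Union>i\<le>0. \<Union>(U i))"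
    proof
      fix y :: real show "y \<in> (\<Union>i\<le>0. \<Union>(U i))"
        by (cases "\<bar>y\<bar> < r") (auto simp: U_def intro!: exI[of _ "{y}"])
    qed
    have s: "\<forall>A\<in>U 0. \<forall>B\<in>U 0. A \<noteq> B \<longrightarrow> (\<forall>x\<in>A. \<forall>y\<in>B. r \<le> dY x y)"
      unfolding U_def dY_def by auto
    have d: "\<forall>A\<in>U 0. \<forall>x\<in>A. \<forall>y\<in>A. dY x y \<le> r + 2"
      unfolding U_def dY_def using r by auto
    show "\<exists>(D::real) (U::nat \<Rightarrow> real set set). (\<forall>i\<le>0. \<forall>A\<in>U i. A \<subseteq> mspace (metric (UNIV, dY))) \<and>
             mspace (metric (UNIV, dY)) \<subseteq> (\<Union>i\<le>0. \<Union> (U i)) \<and>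
             (\<forall>i\<le>0. \<forall>A\<in>U i. \<forall>B\<in>U i. A \<noteq> B \<longrightarrow>
                 (\<forall>x\<in>A. \<forall>y\<in>B. r \<le> mdist (metric (UNIV, dY)) x y)) \<and>
             (\<forall>i\<le>0. \<forall>A\<in>U i. \<forall>x\<in>A. \<forall>y\<in>A. mdist (metric (UNIV, dY)) x y \<le> D)"
      apply (rule_tac x="r+2" in exI, rule_tac x=U in exI)
      using c s d by auto
  qed
qed

lemma bounded_asdim:
  assumes "\<forall>x\<in>mspace m. \<forall>y\<in>mspace m. mdist m x y \<le> D"
  shows "asdim_le m 0"
  unfolding asdim_le_def
  by (intro allI impI exI[of _ D] exI[of _ "\<lambda>_. {mspace m}"]) (use assms in auto)

lemma chain_lemma:
  fixes A :: "real set" and p :: "nat \<Rightarrow> real" and d :: "real \<Rightarrow> real \<Rightarrow> real"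
  assumes "p 0 \<in> A" "\<And>k. k < n \<Longrightarrow> p (Suc k) \<in> \<Union>U"
    "A \<in> U" "\<And>A B x y. A \<in> U \<Longrightarrow> B \<in> U \<Longrightarrow> A \<noteq> B \<Longrightarrow> x \<in> A \<Longrightarrow> y \<in> B \<Longrightarrow> d x y \<ge> 2"
    "\<And>k. k < n \<Longrightarrow> d (p k) (p (Suc k)) < 2"
  shows "\<forall>k\<le>n. p k \<in> A"
proof (intro allI impI)
  fix k assume "k \<le> n" then show "p k \<in> A"
  proof (induction k)
    case 0 then show ?case using assms(1) by simp
  next
    case (Suc k)
    then have pk: "p k \<in> A" by simp
    have "p (Suc k) \<in> \<Union>U" using assms(2) Suc.prems by simp
    then obtain B where "B \<in> U" "p (Suc k) \<in> B" by blast
    then show ?case using assms(3,4) assms(5)[of k] Suc.prems pk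
      by (metis Suc_le_lessD linorder_not_less)
  qed
qed

lemma X_not_asdim: "\<not> asdim_le (metric ({0..}, dX)) 0"
proof
  interpret Metric_space "{0..}" dX by (rule ms_X)
  assume "asdim_le (metric ({0..}, dX)) 0"
  then obtain D U where
    c: "{0..} \<subseteq> \<Union>(U 0)" and
    s: "\<forall>A\<in>U 0. \<forall>B\<in>U 0. A \<noteq> B \<longrightarrow> (\<forall>x\<in>A. \<forall>y\<in>B. 2 \<le> dX x y)" and
    d: "\<forall>A\<in>U 0. \<forall>x\<in>A. \<forall>y\<in>A. dX x y \<le> D"
    unfolding asdim_le_def by (drule_tac x=2 in spec) auto
  obtain n :: nat where n: "real n > D" "n \<ge> 1"
    by (metis reals_Archimedean2 less_le_trans max.cobounded1 max.cobounded2 of_nat_le_iff le_max_iff_disj nat_le_real_less)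
  define p where "p k = real n + real k / (real n + 1)" for k :: nat
  have gp: "gX (p k) = real n" if "k \<le> n" for k
  proof -
    have "real k / (real n + 1) < 1" using that by (simp add: field_simps)
    moreover have "0 \<le> real k / (real n + 1)" by simp
    ultimately have "\<lfloor>p k\<rfloor> = int n" unfolding p_def by (intro floor_unique) auto
    then show ?thesis by (simp add: gX_def)
  qed
  have dp: "dX (p k) (p l) = \<bar>real k - real l\<bar>" if "k \<le> n" "l \<le> n" for k l
  proof -
    have "p k - p l = (real k - real l) / (real n + 1)" unfolding p_def by (simp add: diff_divide_distrib)
    then have "(real n + 1) * \<bar>p k - p l\<bar> = \<bar>real k - real l\<bar>" by simp
    then show ?thesis using gp[OF that(1)] gp[OF that(2)] by (simp add: dX_def)
  qed
  have p0: "p 0 \<in> {0..}" unfolding p_def by simp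
  then obtain A where A: "A \<in> U 0" "p 0 \<in> A" using c by auto
  have "\<forall>k\<le>n. p k \<in> A"
  proof (rule chain_lemma[where U="U 0" and d=dX])
    show "p 0 \<in> A" "A \<in> U 0" by (fact A(2), fact A(1))
    show "p (Suc k) \<in> \<Union>(U 0)" if "k < n" for k using c unfolding p_def by (auto simp: subset_iff)
    show "2 \<le> dX x y" if "A \<in> U 0" "B \<in> U 0" "A \<noteq> B" "x \<in> A" "y \<in> B" for A B x y
      using s that by auto
    show "dX (p k) (p (Suc k)) < 2" if "k < n" for k using dp[of k "Suc k"] that by simp
  qed
  then have "dX (p 0) (p n) \<le> D" using d A by auto
  then show False using dp[of 0 n] n by simp
qed

theorem mainTheorem12:
  shows "\<exists>(X :: real metric) (Y :: real metric) f.
           Lipschitz_continuous_map X Y f \<and>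
           asdim Y = 0 \<and>
           (SUP B\<in>{B. B \<subseteq> mspace Y \<and> Metric_space.mbounded (mspace Y) (mdist Y) B}.
               asdim (submetric X (f -` B \<inter> mspace X))) = 0 \<and>
           asdim X > 0"
proof (intro exI conjI)
  interpret MX: Metric_space "{0..}" dX by (rule ms_X)
  interpret MY: Metric_space UNIV dY by (rule ms_Y)
  let ?X = "metric ({0..}, dX)" and ?Y = "metric (UNIV, dY)"
  show "Lipschitz_continuous_map ?X ?Y gX"
    unfolding Lipschitz_continuous_map_def
  proof (intro conjI exI[of _ 1] ballI)
    show "gX \<in> mspace ?X \<rightarrow> mspace ?Y" by simp
    fix x y assume "x \<in> mspace ?X" "y \<in> mspace ?X"
    show "mdist ?Y (gX x) (gX y) \<le> 1 * mdist ?X x y"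
      using gX_nonneg[of x] gX_nonneg[of y] by (auto simp: dX_def dY_def)
  qed
  show "asdim ?Y = 0" by (rule asdim_zeroI[OF Y_asdim])
  show "asdim ?X > 0" by (rule asdim_posI[OF X_not_asdim])
  have each: "asdim (submetric ?X (gX -` B \<inter> mspace ?X)) = 0" if bd: "MY.mbounded B" for B
  proof -
    obtain a e where ae: "B \<subseteq> MY.mcball a e" using bd unfolding MY.mbounded_def by blast
    define K where "K = max \<bar>a\<bar> e"
    have K0: "0 \<le> K" unfolding K_def by simp
    have bK: "b \<le> K" if "b \<in> B" for b
      using ae that unfolding K_def by (auto simp: dY_def split: if_splits)
    have xK: "x < K + 1" "gX x \<le> K" if "x \<in> gX -` B \<inter> {0..}" for x
      using bK[of "gX x"] gX_le[of x] that by auto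
    show ?thesis
    proof (rule asdim_zeroI, rule bounded_asdim[where D="(K+1)*(K+1) + K + 2"], intro ballI)
      fix x y assume "x \<in> mspace (submetric ?X (gX -` B \<inter> mspace ?X))"
        "y \<in> mspace (submetric ?X (gX -` B \<inter> mspace ?X))"
      then have xy: "x \<in> gX -` B \<inter> {0..}" "y \<in> gX -` B \<inter> {0..}" by auto
      have b1: "\<bar>x - y\<bar> \<le> K + 1" using xK[OF xy(1)] xK[OF xy(2)] xy by auto
      have "(gX x + 1) * \<bar>x - y\<bar> \<le> (K + 1) * (K + 1)"
        using xK(2)[OF xy(1)] b1 gX_nonneg[of x] by (intro mult_mono) auto
      moreover have "max (gX x) (gX y) + 2 \<le> K + 2" using xK(2)[OF xy(1)] xK(2)[OF xy(2)] by simp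
      moreover have "0 \<le> (K+1)*(K+1)" using K0 by simp
      ultimately show "mdist (submetric ?X (gX -` B \<inter> mspace ?X)) x y \<le> (K+1)*(K+1) + K + 2"
        using K0 unfolding mdist_submetric MX.mdist_metric dX_def by (smt (verit))
    qed
  qed
  have ne: "{} \<in> {B. B \<subseteq> mspace ?Y \<and> Metric_space.mbounded (mspace ?Y) (mdist ?Y) B}"
    by simp
  show "(SUP B\<in>{B. B \<subseteq> mspace ?Y \<and> Metric_space.mbounded (mspace ?Y) (mdist ?Y) B}.
               asdim (submetric ?X (gX -` B \<inter> mspace ?X))) = 0"
  proof -
    have "Collect MY.mbounded \<noteq> {}" using MY.mbounded_empty by blast
    then show ?thesis using each by (subst SUP_cong[OF refl, where D="\<lambda>_. 0"]) (auto simp: SUP_const)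
  qed
qed

end
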